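(* Let $q\in\mathbb{C}$ with $0<|q|<1$, let $N$ be a nonnegative integer and $\rho_1,\rho_2$ complex parameters (such that all terms below are well defined). Let $(\alpha_n)_{n\in\mathbb{Z}}$ and $(\beta_n)_{n\ge0}$ be sequences related by \[ \beta_n=\sum_{r=-\infty}^\infty\frac{\alpha_r}{(q)_{n-r}(q)_{n+r+1}}\qquad\text{for all } n\ge 0. \] Then \[ \sum_{n=-\infty}^\infty\frac{(\rho_1,\rho_2, q^{-N})_n}{(q^2/\rho_1, q^2/\rho_2, q^{N+2})_n} \left(\frac{q^{2+N}}{\rho_1\rho_2}\right)^n(-1)^nq^{-\binom{n}{2}}\frac{\alpha_n}{1-q} =\frac{(q^2, q^2/\rho_1\rho_2)_N}{(q^2/\rho_1, q^2/\rho_2)_N} \sum_{n\geq 0}\frac{(\rho_1, \rho_2, q^{-N})_n\,q^n\beta_n}{(\rho_1\rho_2q^{-N-1})_n}. \]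
   Context: For an integer $n$, the $q$-shifted factorial is $(a)_n=(a;q)_n$ with $(a)_0=1$, $(a)_n=(1-a)(1-aq)\cdots(1-aq^{n-1})$ for $n\ge1$, and $(a)_n=[(1-aq^{-1})(1-aq^{-2})\cdots(1-aq^{n})]^{-1}$ for $n\le -1$; in particular $1/(q)_n=0$ for $n<0$. Also $(a_1,\ldots,a_m)_n=(a_1)_n\cdots(a_m)_n$, and $\binom{n}{2}=n(n-1)/2$ for all integers $n$. *)

theory Defs
  imports "HOL-Analysis.Analysis"
begin

text \<open>q-shifted factorial (a;q)_n for integer n, following the paper's convention:
  (a)_n = (1-a)(1-aq)...(1-aq^(n-1)) for n >= 0, and
  (a)_n = 1 / ((1-a q^(-1))(1-a q^(-2))...(1-a q^n)) for n <= -1.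
  (When the product for negative n vanishes, Isabelle's inverse 0 = 0 makes 1/(a)_n = 0,
  in agreement with the convention 1/(q)_n = 0 for n < 0.)\<close>
definition qpoch :: "complex \<Rightarrow> complex \<Rightarrow> int \<Rightarrow> complex" where
  "qpoch q a n =
     (if 0 \<le> n then (\<Prod>k<nat n. (1 - a * q ^ k))
      else inverse (\<Prod>k\<in>{1..nat (- n)}. (1 - a / q ^ k)))"

definition binom2 :: "int \<Rightarrow> int" where
  "binom2 n = n * (n - 1) div 2"

end

theory Submission
  imports Defs
begin


definition qp :: "complex \<Rightarrow> complex \<Rightarrow> nat \<Rightarrow> complex" where
  "qp q a k = (\<Prod>i<k. 1 - a * q ^ i)"

lemma qp_0[simp]: "qp q a 0 = 1" by (simp add: qp_def)
lemma qp_Suc: "qp q a (Suc k) = qp q a k * (1 - a * q ^ k)"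
  by (simp add: qp_def)
lemma qp_add: "qp q a (m + k) = qp q a m * qp q (a * q ^ m) k"
proof (induction k)
  case 0 then show ?case by simp
next
  case (Suc k) then show ?case by (simp add: qp_Suc power_add mult_ac)
qed
lemma qp_Suc': "qp q a (Suc k) = (1 - a) * qp q (a * q) k"
  using qp_add[of q a 1 k] by (simp add: qp_def)
lemma qp_zero: "i < k \<Longrightarrow> a * q ^ i = 1 \<Longrightarrow> qp q a k = 0"
  unfolding qp_def by (rule prod_zero) auto
lemma qp_nz: "(\<And>i. i < k \<Longrightarrow> a * q ^ i \<noteq> 1) \<Longrightarrow> qp q a k \<noteq> 0"
  unfolding qp_def by (subst prod_zero_iff) auto
lemma qpoch_nat[simp]: "qpoch q a (int k) = qp q a k"
  by (simp add: qpoch_def qp_def)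



lemma wz_rat:
  fixes a b c q x y :: complex
  assumes "q \<noteq> 0" "y \<noteq> 0" "a \<noteq> 0" "b \<noteq> 0" "c \<noteq> 0"
    "1 - (a*b/(c*y))*q*x \<noteq> 0"
  shows "(1-c*y)*(1-c*y/(a*b))*(q*x*(1-1/(q*y)))
     - (1-c*y/a)*(1-c*y/b)*(q*x*(1-x/y)*(1-a*b/(c*y))/(1-(a*b/(c*y))*q*x))
   = (1-a*q*x)*(1-b*q*x)*(1-x/y)*(1-c*y/(a*b))/(1-(a*b/(c*y))*q*x)
     - (1-q*x)*(1-c*x)*(1-c*y/(a*b))"
proof -
  have h: "c*y - a*b*q*x \<noteq> 0" using assms by (auto simp: field_simps)
  show ?thesis using assms h by (simp add: field_simps)
qed

lemma gen_e1: fixes p1 p2 U V W :: complex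
  assumes "p1 \<noteq> 0" "p2 \<noteq> 0" "U \<noteq> 0" "V \<noteq> 0" "W \<noteq> 0"
  shows "K * X*Y*Z / ((U*p1)*(V*p2)*W) = X*Y*Z/((U*p1)*(V*p2)*W) * K"
  by simp
lemma gen_e2: fixes p1 p2 p3 p4 U V W :: complex
  assumes "p1 \<noteq> 0" "p2 \<noteq> 0" "U \<noteq> 0" "V \<noteq> 0" "W \<noteq> 0" "p3 \<noteq> 0" "p4 \<noteq> 0"
  shows "K*X*Y*Z / ((U*p1)*(V*p2)*(W*p3/p4)) = X*Y*Z/((U*p1)*(V*p2)*W) * (K*p4/p3)"
  using assms by (simp add: field_simps)
lemma gen_e3: fixes p1 p2 p3 U V W :: complex
  assumes "p1 \<noteq> 0" "p2 \<noteq> 0" "U \<noteq> 0" "V \<noteq> 0" "W \<noteq> 0" "p3 \<noteq> 0"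
  shows "K*X*Y*Z / ((U*p1)*(V*p2)*(W*p3)) = X*Y*Z/((U*p1)*(V*p2)*W) * (K/p3)"
  using assms by (simp add: field_simps)
lemma gen_e4: fixes p1 p2 U V W :: complex
  assumes "p1 \<noteq> 0" "p2 \<noteq> 0" "U \<noteq> 0" "V \<noteq> 0" "W \<noteq> 0"
  shows "X*Y*Z*K/(U*V*W) = X*Y*Z/((U*p1)*(V*p2)*W) * (p1*p2*K)"
  using assms by (simp add: field_simps)

lemma wz_terms:
  fixes a b c q x y X Y Z U V W R w :: complex
  assumes "q \<noteq> 0" "y \<noteq> 0" "a \<noteq> 0" "b \<noteq> 0" "c \<noteq> 0"
    and w: "w = a*b/(c*y)"
    and "1 - w*q*x \<noteq> 0" "1 - w \<noteq> 0" "U \<noteq> 0" "V \<noteq> 0" "W \<noteq> 0"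
    "1 - q*x \<noteq> 0" "1 - c*x \<noteq> 0"
    and R: "(1 - w) * R = W * (1 - w*q*x)"
  shows "(1-c*y)*(1-c*y/(a*b)) * (q*x*X*Y*((1 - inverse (y*q))*Z) / ((U*(1-q*x))*(V*(1-c*x))*W))
     - (1-c*y/a)*(1-c*y/b) * (q*x*X*Y*(Z*(1 - inverse y * x)) / ((U*(1-q*x))*(V*(1-c*x))*R))
   = X*(1-a*q*x)*Y*(1-b*q*x)*(Z*(1-inverse y*x))*(1-c*y/(a*b)) / ((U*(1-q*x))*(V*(1-c*x))*(W*(1-w*q*x)))
     - X*Y*Z*(1-c*y/(a*b))/(U*V*W)"
proof -
  have Rv: "R = W * (1 - w*q*x) / (1 - w)" using R assms by (simp add: field_simps)
  define E where "E = X*Y*Z/((U*(1-q*x))*(V*(1-c*x))*W)"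
  have e1: "q*x*X*Y*((1 - inverse (y*q))*Z) / ((U*(1-q*x))*(V*(1-c*x))*W) = E * (q*x*(1-1/(q*y)))"
    unfolding E_def using gen_e1[OF assms(12,13,9,10,11), of "q*x*(1-1/(q*y))" X Y Z]
    by (simp add: mult_ac divide_inverse)
  have e2: "q*x*X*Y*(Z*(1 - inverse y * x)) / ((U*(1-q*x))*(V*(1-c*x))*R)
     = E * (q*x*(1-x/y)*(1-w)/(1-w*q*x))"
    unfolding E_def Rv using gen_e2[OF assms(12,13,9,10,11) assms(7) assms(8), of "q*x*(1-x/y)" X Y Z]
    by (simp add: mult_ac divide_inverse)
  have e3: "X*(1-a*q*x)*Y*(1-b*q*x)*(Z*(1-inverse y*x))*(1-c*y/(a*b)) / ((U*(1-q*x))*(V*(1-c*x))*(W*(1-w*q*x)))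
     = E * ((1-a*q*x)*(1-b*q*x)*(1-x/y)*(1-c*y/(a*b))/(1-w*q*x))"
    unfolding E_def using gen_e3[OF assms(12,13,9,10,11) assms(7), of "(1-a*q*x)*(1-b*q*x)*(1-x/y)*(1-c*y/(a*b))" X Y Z]
    by (simp add: mult_ac divide_inverse)
  have e4: "X*Y*Z*(1-c*y/(a*b))/(U*V*W) = E * ((1-q*x)*(1-c*x)*(1-c*y/(a*b)))"
    unfolding E_def using gen_e4[OF assms(12,13,9,10,11), of X Y Z "1-c*y/(a*b)"]
    by (simp add: mult_ac)
  have "1 - (a*b/(c*y))*q*x \<noteq> 0" using assms by simp
  note r = wz_rat[OF assms(1-5) this, folded w]
  show ?thesis unfolding e1 e2 e3 e4 using r
    by (metis (no_types, lifting) right_diff_distrib mult.left_commute)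
qed



definition tt :: "complex \<Rightarrow> complex \<Rightarrow> complex \<Rightarrow> complex \<Rightarrow> nat \<Rightarrow> nat \<Rightarrow> complex" where
 "tt q a b c m k = q^k * qp q a k * qp q b k * qp q (inverse (q^m)) k
     / (qp q q k * qp q c k * qp q (a*b*q/(c*q^m)) k)"

lemma qp_inv_zero: "q \<noteq> 0 \<Longrightarrow> n < k \<Longrightarrow> qp q (inverse (q^n)) k = 0"
  by (rule qp_zero[of n]) auto

lemma saal_step:
  fixes q a b c :: complex and n :: nat
  assumes q0: "q \<noteq> 0" and qj: "\<forall>i. 0 < i \<longrightarrow> q^i \<noteq> 1"
    and a0: "a \<noteq> 0" and b0: "b \<noteq> 0" and c0: "c \<noteq> 0"
    and hc: "\<forall>i<Suc n. c*q^i \<noteq> 1"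
    and hw: "\<forall>i\<le>Suc n. a*b*q*q^i \<noteq> c*q^(Suc n)"
  shows "(1-c*q^n)*(1-c*q^n/(a*b)) * (\<Sum>k\<le>Suc n. tt q a b c (Suc n) k)
       = (1-c*q^n/a)*(1-c*q^n/b) * (\<Sum>k\<le>n. tt q a b c n k)"
proof -
  define w where "w = a*b/(c*q^n)"
  define y where "y = q^n"
  have y0: "y \<noteq> 0" using q0 by (simp add: y_def)
  define A where "A = (1-c*y)*(1-c*y/(a*b))"
  define B where "B = (1-c*y/a)*(1-c*y/b)"
  define G where "G j = qp q a (Suc j) * qp q b (Suc j) * qp q (inverse y) j * (1 - c*y/(a*b))
       / (qp q q j * qp q c j * qp q w (Suc j))" for j
  have weq1: "a*b*q/(c*q^(Suc n)) = w" using q0 by (simp add: w_def)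
  have weq2: "a*b*q/(c*q^n) = w*q" by (simp add: w_def)
  have wi: "w*q^i \<noteq> 1" if "i \<le> Suc n" for i
  proof
    assume "w*q^i = 1"
    then have "a*b*q^i = c*q^n" using q0 c0 by (simp add: w_def field_simps)
    then have "a*b*q*q^i = c*q^(Suc n)" by (simp add: mult_ac)
    with hw that show False by auto
  qed
  have nzU: "qp q q j \<noteq> 0" for j
    by (rule qp_nz) (use qj in \<open>auto simp: power_Suc[symmetric] simp del: power_Suc\<close>)
  have nzV: "qp q c j \<noteq> 0" if "j \<le> Suc n" for j
    by (rule qp_nz) (use hc that in auto)
  have nzW: "qp q w j \<noteq> 0" if "j \<le> Suc (Suc n)" for j
    by (rule qp_nz) (use wi that in auto)
  have nzR: "qp q (w*q) j \<noteq> 0" if "j \<le> Suc n" for j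
    by (rule qp_nz) (use wi[of "Suc _"] that in \<open>auto simp: mult_ac\<close>)
  have nz1w: "1 - w \<noteq> 0" using wi[of 0] by auto
  have tele: "(\<Sum>k\<le>m. A * tt q a b c (Suc n) k - B * tt q a b c n k) = G m" if "m \<le> Suc n" for m
    using that
  proof (induction m)
    case 0
    have "A - B = (1-a)*(1-b)*(1-c*y/(a*b))/(1-w)"
      using nz1w a0 b0 c0 y0 unfolding A_def B_def w_def y_def[symmetric]
      by (simp add: field_simps) 
    then show ?case by (simp add: tt_def G_def qp_def)
  next
    case (Suc j)
    then have jn: "j \<le> n" by simp
    define x where "x = q^j"
    have x0: "x \<noteq> 0" using q0 by (simp add: x_def)
    have "A * tt q a b c (Suc n) (Suc j) - B * tt q a b c n (Suc j) = G (Suc j) - G j"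
    proof -
      have t1: "tt q a b c (Suc n) (Suc j) = q*x*qp q a (Suc j)*qp q b (Suc j)*((1 - inverse (y*q))*qp q (inverse y) j)
          / ((qp q q j*(1-q*x))*(qp q c j*(1-c*x))*qp q w (Suc j))"
      proof -
        have "qp q (inverse (q^Suc n)) (Suc j) = (1 - inverse (y*q)) * qp q (inverse y) j"
        proof -
          have e: "inverse (q^Suc n) * q = inverse y" using q0 by (simp add: y_def)
          show ?thesis unfolding qp_Suc' e by (simp add: y_def mult_ac)
        qed
        then show ?thesis unfolding tt_def weq1 by (simp add: qp_Suc x_def mult_ac)
      qed
      have t0: "tt q a b c n (Suc j) = q*x*qp q a (Suc j)*qp q b (Suc j)*(qp q (inverse y) j * (1 - inverse y * x))
          / ((qp q q j*(1-q*x))*(qp q c j*(1-c*x))*qp q (w*q) (Suc j))"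
        unfolding tt_def weq2 by (simp add: qp_Suc x_def y_def mult_ac)
      have g1: "G (Suc j) = qp q a (Suc j)*(1-a*q*x)*qp q b (Suc j)*(1-b*q*x)*(qp q (inverse y) j*(1-inverse y*x))*(1-c*y/(a*b))
          / ((qp q q j*(1-q*x))*(qp q c j*(1-c*x))*(qp q w (Suc j)*(1-w*q*x)))"
        unfolding G_def by (simp add: qp_Suc x_def mult_ac)
      have g0: "G j = qp q a (Suc j)*qp q b (Suc j)*qp q (inverse y) j*(1-c*y/(a*b))/(qp q q j*qp q c j*qp q w (Suc j))"
        unfolding G_def ..
      have R: "(1 - w) * qp q (w*q) (Suc j) = qp q w (Suc j) * (1 - w*q*x)"
        using qp_Suc'[of q w "Suc j"] qp_Suc[of q w "Suc j"] by (simp add: x_def mult_ac)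
      have wqx: "1 - w*q*x \<noteq> 0" using wi[of "Suc j"] jn by (simp add: x_def mult_ac)
      have qx: "1 - q*x \<noteq> 0" using qj[rule_format, of "Suc j"] by (simp add: x_def)
      have cx: "1 - c*x \<noteq> 0" using hc jn by (simp add: x_def)
      show ?thesis unfolding t1 t0 g1 g0 A_def B_def
        by (rule wz_terms[OF q0 y0 a0 b0 c0 _ wqx nz1w nzU nzV[of j] nzW[of "Suc j"] qx cx R])
           (use jn in \<open>simp_all add: w_def y_def\<close>)
    qed
    then show ?case using Suc by simp
  qed
  have G0: "G (Suc n) = 0" unfolding G_def y_def using qp_inv_zero[OF q0, of n "Suc n"] by simp
  have T0: "tt q a b c n (Suc n) = 0" unfolding tt_def using qp_inv_zero[OF q0, of n "Suc n"] by simp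
  have "A * (\<Sum>k\<le>Suc n. tt q a b c (Suc n) k) - B * (\<Sum>k\<le>Suc n. tt q a b c n k) = 0"
  proof -
    have "(\<Sum>k\<le>Suc n. A * tt q a b c (Suc n) k - B * tt q a b c n k)
       = A * (\<Sum>k\<le>Suc n. tt q a b c (Suc n) k) - B * (\<Sum>k\<le>Suc n. tt q a b c n k)"
      by (simp only: sum_subtractf sum_distrib_left)
    then show ?thesis using tele[of "Suc n"] G0 by simp
  qed
  then have "A * (\<Sum>k\<le>Suc n. tt q a b c (Suc n) k) = B * (\<Sum>k\<le>n. tt q a b c n k)"
    using T0 by simp
  then show ?thesis by (simp add: A_def B_def y_def)
qed

lemma saal:
  fixes q a b c :: complex and M :: nat
  assumes q0: "q \<noteq> 0" and qj: "\<forall>i. 0 < i \<longrightarrow> q^i \<noteq> 1"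
    and a0: "a \<noteq> 0" and b0: "b \<noteq> 0" and c0: "c \<noteq> 0"
    and hc: "\<forall>i<M. c*q^i \<noteq> 1"
    and hw: "\<forall>i\<le>M. a*b*q*q^i \<noteq> c*q^M"
  shows "qp q c M * qp q (c/(a*b)) M * (\<Sum>k\<le>M. tt q a b c M k) = qp q (c/a) M * qp q (c/b) M"
  using hc hw
proof (induction M)
  case 0
  then show ?case by (simp add: tt_def)
next
  case (Suc n)
  have hc': "\<forall>i<n. c*q^i \<noteq> 1" using Suc.prems by auto
  have hw': "\<forall>i\<le>n. a*b*q*q^i \<noteq> c*q^n"
  proof (intro allI impI notI)
    fix i assume "i \<le> n" "a*b*q*q^i = c*q^n"
    then have "a*b*q*q^(Suc i) = c*q^(Suc n)" by (simp add: mult_ac)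
    with Suc.prems \<open>i \<le> n\<close> show False by auto
  qed
  note IH = Suc.IH[OF hc' hw']
  note st = saal_step[OF q0 qj a0 b0 c0 Suc.prems]
  have "qp q c (Suc n) * qp q (c/(a*b)) (Suc n) * (\<Sum>k\<le>Suc n. tt q a b c (Suc n) k)
      = qp q c n * qp q (c/(a*b)) n * ((1-c*q^n)*(1-c*q^n/(a*b)) * (\<Sum>k\<le>Suc n. tt q a b c (Suc n) k))"
    by (simp add: qp_Suc mult_ac)
  also have "\<dots> = (1-c*q^n/a)*(1-c*q^n/b) * (qp q c n * qp q (c/(a*b)) n * (\<Sum>k\<le>n. tt q a b c n k))"
    unfolding st by (simp add: mult_ac)
  also have "\<dots> = qp q (c/a) (Suc n) * qp q (c/b) (Suc n)"
    unfolding IH by (simp add: qp_Suc mult_ac)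
  finally show ?case .
qed



fun bn :: "nat \<Rightarrow> nat" where
  "bn 0 = 0" | "bn (Suc s) = bn s + s"

lemma bn_twice: "2 * bn s = s * (s - 1)"
proof (induction s)
  case 0 then show ?case by simp
next
  case (Suc s) then show ?case by (cases s) (simp_all add: algebra_simps)
qed

lemma binom2_nat: "binom2 (int s) = int (bn s)"
proof -
  have "int s * (int s - 1) = 2 * int (bn s)"
    using arg_cong[OF bn_twice[of s], of int] by (cases s) (auto simp: algebra_simps)
  then show ?thesis unfolding binom2_def by simp
qed

lemma binom2_neg: "binom2 (- int m) = int (bn m + m)"
proof -
  have "2 * (bn m + m) = m * (m + 1)" using bn_twice[of m] by (cases m) (auto simp: algebra_simps)
  note e = arg_cong[OF this, of int]
  have "- int m * (- int m - 1) = 2 * int (bn m + m)"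
    using e by (simp add: algebra_simps)
  then show ?thesis unfolding binom2_def by simp
qed

lemma qpoch_neg: "qpoch q a (- int m) = inverse (\<Prod>k\<in>{1..m}. 1 - a / q ^ k)"
  by (cases "m = 0") (simp_all add: qpoch_def)

lemma negprod:
  fixes q x :: complex
  assumes "q \<noteq> 0" "x \<noteq> 0"
  shows "(\<Prod>k\<in>{1..m}. 1 - x / q ^ k) * q ^ (bn m + m) = (-x)^m * qp q (q/x) m"
proof (induction m)
  case 0 then show ?case by simp
next
  case (Suc m)
  have "(\<Prod>k\<in>{1..Suc m}. 1 - x / q ^ k) * q ^ (bn (Suc m) + Suc m)
      = ((\<Prod>k\<in>{1..m}. 1 - x / q ^ k) * q ^ (bn m + m)) * ((1 - x / q ^ Suc m) * q ^ Suc m)"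
    by (simp add: prod.nat_ivl_Suc' power_add mult_ac)
  also have "\<dots> = (-x)^m * qp q (q/x) m * ((-x) * (1 - q/x * q^m))"
    unfolding Suc using assms by (simp add: field_simps)
  also have "\<dots> = (-x)^Suc m * qp q (q/x) (Suc m)" by (simp add: qp_Suc mult_ac)
  finally show ?case .
qed

lemma qpoch_neg_eq:
  fixes q x :: complex
  assumes "q \<noteq> 0" "x \<noteq> 0"
  shows "qpoch q x (- int m) = q ^ (bn m + m) / ((-x)^m * qp q (q/x) m)"
proof -
  have "(\<Prod>k\<in>{1..m}. 1 - x / q ^ k) = (-x)^m * qp q (q/x) m / q ^ (bn m + m)"
    using negprod[OF assms, of m] assms by (simp add: field_simps)
  then show ?thesis by (simp add: qpoch_neg)
qed

lemma qp_reflect: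
  fixes q u z :: complex
  assumes "q \<noteq> 0" "u * z * q ^ s = q"
  shows "qp q u s * (-z)^s * q ^ bn s = qp q z s"
  using assms(2)
proof (induction s arbitrary: u)
  case 0 then show ?case by simp
next
  case (Suc s)
  have h: "u * q * z * q^s = q" using Suc.prems by (simp add: mult_ac)
  have h1: "u * z * q^s = 1" using Suc.prems assms(1) by (simp add: mult_ac)
  have "qp q u (Suc s) * (-z)^Suc s * q ^ bn (Suc s)
     = (qp q (u*q) s * (-z)^s * q^bn s) * ((1 - u) * (-z) * q^s)"
    by (simp add: qp_Suc' power_add mult_ac)
  also have "\<dots> = qp q z s * (1 - z*q^s)"
    unfolding Suc.IH[OF h] using h1 by (simp add: algebra_simps)
  finally show ?case by (simp add: qp_Suc)
qed

lemma qq_neg: "q \<noteq> 0 \<Longrightarrow> k < 0 \<Longrightarrow> qpoch q q k = 0"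
proof -
  assume q: "q \<noteq> 0" "k < 0"
  obtain m where m: "k = - int m" "m \<ge> 1" 
  proof
    show "k = - int (nat (-k))" using q(2) by simp
    show "nat (-k) \<ge> 1" using q(2) by simp
  qed
  have "(\<Prod>k\<in>{1..m}. 1 - q / q ^ k) = 0"
    by (rule prod_zero) (use m q in \<open>auto intro!: bexI[of _ 1]\<close>)
  then show ?thesis using m by (simp add: qpoch_neg)
qed



definition cL :: "complex \<Rightarrow> complex \<Rightarrow> complex \<Rightarrow> nat \<Rightarrow> int \<Rightarrow> complex" where
  "cL q r1 r2 N n = (qpoch q r1 n * qpoch q r2 n * qpoch q (inverse (q ^ N)) n)
            / (qpoch q (q\<^sup>2 / r1) n * qpoch q (q\<^sup>2 / r2) n * qpoch q (q ^ (N + 2)) n)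
            * (q ^ (2 + N) / (r1 * r2)) powi n * (-1) powi n * q powi (- binom2 n) / (1 - q)"

definition ee :: "complex \<Rightarrow> nat \<Rightarrow> int \<Rightarrow> complex" where
  "ee q n r = 1 / (qpoch q q (int n - r) * qpoch q q (int n + r + 1))"

definition dR :: "complex \<Rightarrow> complex \<Rightarrow> complex \<Rightarrow> nat \<Rightarrow> nat \<Rightarrow> complex" where
  "dR q r1 r2 N n = qp q r1 n * qp q r2 n * qp q (inverse (q ^ N)) n * q ^ n / qp q (r1 * r2 / q ^ (N + 1)) n"

definition KK :: "complex \<Rightarrow> complex \<Rightarrow> complex \<Rightarrow> nat \<Rightarrow> complex" where
  "KK q r1 r2 N = (qp q (q\<^sup>2) N * qp q (q\<^sup>2 / (r1 * r2)) N) / (qp q (q\<^sup>2 / r1) N * qp q (q\<^sup>2 / r2) N)"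

locale QS =
  fixes q r1 r2 :: complex and N :: nat
  assumes q0: "q \<noteq> 0" and qj: "\<forall>i. 0 < i \<longrightarrow> q^i \<noteq> 1"
    and r10: "r1 \<noteq> 0" and r20: "r2 \<noteq> 0"
    and wd1: "\<forall>m::nat. 1 \<le> m \<longrightarrow> r1 \<noteq> q ^ m"
    and wd2: "\<forall>m::nat. 1 \<le> m \<longrightarrow> r2 \<noteq> q ^ m"
    and wd3: "\<forall>j::nat. r1 * r2 * q ^ j \<noteq> q ^ (N + 1)"
begin

lemma nz_qq: "qp q q j \<noteq> 0"
  by (rule qp_nz) (use qj in \<open>auto simp: power_Suc[symmetric] simp del: power_Suc\<close>)

lemma nz_qpow: "qp q (q ^ (Suc e)) j \<noteq> 0"
  by (rule qp_nz) (use qj in \<open>auto simp: power_add[symmetric] simp del: power_Suc\<close>)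

lemma nz_r1: "qp q (q\<^sup>2 / r1) j \<noteq> 0"
proof (rule qp_nz)
  fix i assume "i < j"
  show "q\<^sup>2 / r1 * q ^ i \<noteq> 1"
  proof
    assume "q\<^sup>2 / r1 * q ^ i = 1"
    then have "r1 = q ^ (i + 2)" using r10 by (simp add: field_simps power_add power2_eq_square)
    then show False using wd1[rule_format, of "i+2"] by simp
  qed
qed

lemma nz_r2: "qp q (q\<^sup>2 / r2) j \<noteq> 0"
proof (rule qp_nz)
  fix i assume "i < j"
  show "q\<^sup>2 / r2 * q ^ i \<noteq> 1"
  proof
    assume "q\<^sup>2 / r2 * q ^ i = 1"
    then have "r2 = q ^ (i + 2)" using r20 by (simp add: field_simps power_add power2_eq_square)
    then show False using wd2[rule_format, of "i+2"] by simp
  qed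
qed

lemma nz_w0: "qp q (r1 * r2 / q ^ (N + 1)) j \<noteq> 0"
proof (rule qp_nz)
  fix i assume "i < j"
  show "r1 * r2 / q ^ (N + 1) * q ^ i \<noteq> 1"
  proof
    assume "r1 * r2 / q ^ (N + 1) * q ^ i = 1"
    then have "r1 * r2 * q ^ i = q ^ (N + 1)" using q0 by (simp add: field_simps)
    with wd3 show False by blast
  qed
qed

lemma nz_u: "j \<le> N \<Longrightarrow> qp q (q\<^sup>2 / (r1 * r2)) j \<noteq> 0"
proof (rule qp_nz)
  fix i assume "j \<le> N" "i < j"
  show "q\<^sup>2 / (r1 * r2) * q ^ i \<noteq> 1"
  proof
    assume "q\<^sup>2 / (r1 * r2) * q ^ i = 1"
    then have "r1 * r2 = q ^ (i + 2)" using r10 r20 by (simp add: field_simps power_add power2_eq_square)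
    then have "r1 * r2 * q ^ (N - 1 - i) = q ^ (i + 2 + (N - 1 - i))" by (simp add: power_add)
    also have "i + 2 + (N - 1 - i) = N + 1" using \<open>j \<le> N\<close> \<open>i < j\<close> by simp
    finally show False using wd3 by blast
  qed
qed

lemma ee_zero_low: "n < s \<Longrightarrow> ee q n (int s) = 0"
  unfolding ee_def using qq_neg[OF q0, of "int n - int s"] by simp

end



lemma pow2s: "(x::complex) ^ (s * 2) = x ^ s * x ^ s" "(x::complex) ^ (2 * s) = x ^ s * x ^ s"
  by (simp_all add: power_mult power2_eq_square flip: mult.commute)

context QS begin

lemma coef_pos:
  assumes sN: "s \<le> N"
  shows "cL q r1 r2 N (int s) = KK q r1 r2 N * (\<Sum>n\<le>N. dR q r1 r2 N n * ee q n (int s))"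
proof -
  define M where "M = N - s"
  have NM: "N = s + M" using sN by (simp add: M_def)
  define a where "a = r1 * q^s"
  define b where "b = r2 * q^s"
  define c where "c = q^(2* s+2)"
  define w0 where "w0 = r1 * r2 / q ^ (N + 1)"
  define Cs where "Cs = qp q r1 s * qp q r2 s * qp q (inverse (q^N)) s * q^s / (qp q w0 s * qp q q (2* s+1))"
  have a0: "a \<noteq> 0" and b0: "b \<noteq> 0" and c0: "c \<noteq> 0"
    using q0 r10 r20 by (auto simp: a_def b_def c_def)
  have sumA: "(\<Sum>n\<le>N. dR q r1 r2 N n * ee q n (int s)) = (\<Sum>j\<le>M. dR q r1 r2 N (j+s) * ee q (j+s) (int s))"
  proof -
    let ?f = "\<lambda>n. dR q r1 r2 N n * ee q n (int s)"
    have "{..N} = {..<s} \<union> {s..N}" using sN by auto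
    then have "sum ?f {..N} = sum ?f ({..<s} \<union> {s..N})" by simp
    also have "\<dots> = sum ?f {..<s} + sum ?f {s..N}"
      by (rule sum.union_disjoint) auto
    also have "sum ?f {..<s} = 0" by (rule sum.neutral) (auto simp: ee_zero_low)
    also have "sum ?f {s..N} = sum ?f {0+s..M+s}" using NM by (simp add: add.commute)
    also have "\<dots> = (\<Sum>j=0..M. ?f (j+s))" by (rule sum.shift_bounds_cl_nat_ivl)
    finally show ?thesis by (simp add: atMost_atLeast0)
  qed
  have trm: "dR q r1 r2 N (j+s) * ee q (j+s) (int s) = Cs * tt q a b c M j" for j
  proof -
    have i1: "int (j+s) - int s = int j" by simp
    have i2: "int (j+s) + int s + 1 = int (2* s+1+j)" by simp
    have e: "ee q (j+s) (int s) = 1 / (qp q q j * (qp q q (2* s+1) * qp q c j))"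
      unfolding ee_def i1 i2 qpoch_nat qp_add by (simp add: c_def power_add power_mult_distrib mult_ac power2_eq_square
         flip: power_Suc)
    have p1: "inverse (q^N) * q^s = inverse (q^M)" using q0 NM by (simp add: power_add)
    have p2: "w0 * q^s = a*b*q/(c*q^M)" using q0 NM
      by (simp add: w0_def a_def b_def c_def power_add field_simps power2_eq_square mult_2 mult_2_right)
    have d: "dR q r1 r2 N (j+s) = (qp q r1 s * qp q (r1*q^s) j) * (qp q r2 s * qp q (r2*q^s) j)
       * (qp q (inverse (q^N)) s * qp q (inverse (q^N)*q^s) j) * (q^s * q^j) / (qp q w0 s * qp q (w0*q^s) j)"
      unfolding dR_def w0_def by (simp add: qp_add[of q _ s j, simplified add.commute] power_add mult_ac add.commute)
    show ?thesis unfolding e d p1 p2 tt_def Cs_def a_def[symmetric] b_def[symmetric]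
      by (simp add: divide_inverse inverse_mult_distrib mult_ac)
  qed
  have hc: "\<forall>i<M. c*q^i \<noteq> 1"
  proof (intro allI impI)
    fix i
    have "q^(2 * s+2+i) \<noteq> 1" by (rule qj[rule_format]) simp
    then show "c*q^i \<noteq> 1" by (simp add: c_def power_add mult_ac)
  qed
  have hw: "\<forall>i\<le>M. a*b*q*q^i \<noteq> c*q^M"
  proof (intro allI impI notI)
    fix i assume "i \<le> M" "a*b*q*q^i = c*q^M"
    have e1: "a*b*q*q^i = r1*r2*q^(s+i)*q^(Suc s)" by (simp add: a_def b_def power_add mult_ac)
    have e2: "c*q^M = q^(N+1)*q^(Suc s)"
      unfolding c_def NM by (simp add: power_add mult_ac power2_eq_square mult_2 pow2s)
    have "(r1*r2*q^(s+i)) * q^(Suc s) = q^(N+1) * q^(Suc s)"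
      using \<open>a*b*q*q^i = c*q^M\<close> e1 e2 by simp
    then have "r1*r2*q^(s+i) = q^(N+1)" using q0 by simp
    with wd3 show False by blast
  qed
  have saalM: "qp q c M * qp q (c/(a*b)) M * (\<Sum>k\<le>M. tt q a b c M k) = qp q (c/a) M * qp q (c/b) M"
    by (rule saal[OF q0 qj a0 b0 c0 hc hw])
  have cab: "c/(a*b) = q\<^sup>2/(r1*r2)" using q0
    by (simp add: a_def b_def c_def field_simps power_add power2_eq_square mult_2 pow2s)
  have ca: "c/a = q\<^sup>2/r1 * q^s" using q0 r10
    by (simp add: a_def c_def field_simps power_add power2_eq_square mult_2 pow2s)
  have cb: "c/b = q\<^sup>2/r2 * q^s" using q0 r20
    by (simp add: b_def c_def field_simps power_add power2_eq_square mult_2 pow2s)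
  have nzCM: "qp q c M \<noteq> 0" unfolding c_def
    using nz_qpow[of "2 * s + 1" M] by simp
  have nzU1: "qp q (c/(a*b)) M \<noteq> 0" unfolding cab by (rule nz_u) (simp add: M_def)
  have T: "(\<Sum>k\<le>M. tt q a b c M k) = qp q (c/a) M * qp q (c/b) M / (qp q c M * qp q (c/(a*b)) M)"
    using saalM nzCM nzU1 by (simp add: field_simps)
  define v where "v = q\<^sup>2/(r1*r2) * q^M"
  have f1: "qp q (q\<^sup>2/r1) N = qp q (q\<^sup>2/r1) s * qp q (c/a) M" unfolding NM ca qp_add ..
  have f2: "qp q (q\<^sup>2/r2) N = qp q (q\<^sup>2/r2) s * qp q (c/b) M" unfolding NM cb qp_add ..
  have f3: "qp q q (2 * s+1) * qp q c M = (1-q) * qp q (q\<^sup>2) N * qp q (q^(N+2)) s"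
  proof -
    have cc: "q * q^(2 * s+1) = c" by (simp add: c_def)
    have "qp q q (2 * s+1) * qp q c M = qp q q (2 * s+1+M)"
      unfolding qp_add cc ..
    also have "2 * s+1+M = Suc N + s" using NM by simp
    also have "qp q q (Suc N + s) = (1-q) * qp q (q\<^sup>2) N * qp q (q^(N+2)) s"
      unfolding qp_add qp_Suc' by (simp add: power2_eq_square mult_ac)
    finally show ?thesis .
  qed
  have f4: "qp q (q\<^sup>2/(r1*r2)) N = qp q (c/(a*b)) M * qp q v s"
    unfolding cab v_def using NM qp_add[of q "q\<^sup>2/(r1*r2)" M s] by (simp add: add.commute)
  have f5: "qp q v s * (-w0)^s * q^(bn s) = qp q w0 s"
  proof (rule qp_reflect[OF q0])
    show "v * w0 * q^s = q" using q0 r10 r20 NM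
      by (simp add: v_def w0_def field_simps power_add power2_eq_square)
  qed
  have nzD3: "qp q (q^(N+2)) s \<noteq> 0" using nz_qpow[of "N+1" s] by simp
  have nzW: "qp q w0 s \<noteq> 0" unfolding w0_def by (rule nz_w0)
  have nzQN: "qp q (q\<^sup>2) N \<noteq> 0" using nz_qpow[of 1 N] by (simp add: power2_eq_square)
  have nzq1: "1 - q \<noteq> 0" using qj[rule_format, of 1] by auto
  have nzD1: "qp q (q\<^sup>2/r1) s \<noteq> 0" "qp q (c/a) M \<noteq> 0" using nz_r1[of N] unfolding f1 by auto
  have nzD2: "qp q (q\<^sup>2/r2) s \<noteq> 0" "qp q (c/b) M \<noteq> 0" using nz_r2[of N] unfolding f2 by auto
  have nzw0: "w0 \<noteq> 0" using q0 r10 r20 by (simp add: w0_def)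
  have Q2: "qp q q (2 * s+1) = (1-q) * qp q (q\<^sup>2) N * qp q (q^(N+2)) s / qp q c M"
    using f3 nzCM by (simp add: field_simps)
  have V: "qp q v s = qp q w0 s / ((-w0)^s * q^(bn s))"
    using f5 nzw0 q0 by (simp add: field_simps)
  have pw: "(q ^ (2 + N) / (r1 * r2)) ^ s * (-1)^s = q^s / (-w0)^s"
  proof -
    have base: "(q^(2+N)/(r1*r2)) * (-1) * (-w0) = q"
      using q0 r10 r20 by (simp add: w0_def field_simps)
    then have "(q^(2+N)/(r1*r2))^s * (-1)^s * (-w0)^s = q^s" by (metis power_mult_distrib)
    moreover have "(-w0)^s \<noteq> 0" using q0 r10 r20 by (simp add: w0_def)
    ultimately show ?thesis by (simp add: field_simps)
  qed
  have cLs: "cL q r1 r2 N (int s) = qp q r1 s * qp q r2 s * qp q (inverse (q^N)) s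
      / (qp q (q\<^sup>2/r1) s * qp q (q\<^sup>2/r2) s * qp q (q^(N+2)) s) * (q^s / (-w0)^s) / q^(bn s) / (1-q)"
    unfolding cL_def qpoch_nat binom2_nat power_int_minus power_int_of_nat pw[symmetric]
    by (simp add: divide_inverse mult_ac)
  have KKe: "KK q r1 r2 N = qp q (q\<^sup>2) N * (qp q (c/(a*b)) M * qp q v s)
      / ((qp q (q\<^sup>2/r1) s * qp q (c/a) M) * (qp q (q\<^sup>2/r2) s * qp q (c/b) M))"
    unfolding KK_def f1 f2 f4 ..
  show ?thesis
    unfolding sumA trm sum_distrib_left[symmetric] T cLs KKe Cs_def Q2 V
    using nzD1 nzD2 nzD3 nzW nzQN nzq1 nzCM nzU1 nzw0 q0
    by (simp add: field_simps)
qed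

end


lemma qpoch_negS:
  fixes q x :: complex
  assumes "q \<noteq> 0" "x \<noteq> 0"
  shows "qpoch q x (- int s - 1) = (q^(bn s) * q^s * q^s * q) / ((-x) * (-1)^s * x^s * ((1 - q/x) * qp q (q/x*q) s))"
proof -
  have "- int s - 1 = - int (Suc s)" by simp
  have p1: "q^(bn (Suc s) + Suc s) = q^(bn s) * q^s * q^s * q"
    by (simp only: bn.simps power_add power_Suc mult_ac)
  have p2: "(-x)^(Suc s) = (-x) * (-1)^s * x^s"
    by (simp only: power_Suc power_minus[of x s] mult.assoc)
  show ?thesis unfolding \<open>- int s - 1 = - int (Suc s)\<close> qpoch_neg_eq[OF assms, of "Suc s"] p1 p2 qp_Suc' ..
qed

context QS begin

lemma cL_reflect:
  shows "cL q r1 r2 N (- int s - 1) = cL q r1 r2 N (int s)"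
proof -
  define P where "P = q^s"
  define B where "B = q^(bn s)"
  define Q where "Q = q^N"
  define Qs where "Qs = (q^N)^s"
  define R1 where "R1 = r1^s"
  define R2 where "R2 = r2^s"
  define E where "E = (-1::complex)^s"
  define A1 where "A1 = qp q r1 s"
  define A2 where "A2 = qp q r2 s"
  define A3 where "A3 = qp q (inverse (q^N)) s"
  define B1 where "B1 = qp q (q\<^sup>2/r1) s"
  define B2 where "B2 = qp q (q\<^sup>2/r2) s"
  define B3 where "B3 = qp q (q^(N+2)) s"
  define C1 where "C1 = 1 - q/r1"
  define C2 where "C2 = 1 - q/r2"
  define C3 where "C3 = 1 - q*Q"
  have Q0: "Q \<noteq> 0" using q0 by (simp add: Q_def)
  have nzB: "B1 \<noteq> 0" "B2 \<noteq> 0" "B3 \<noteq> 0"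
    using nz_r1 nz_r2 nz_qpow[of "N+1" s] by (simp_all add: B1_def B2_def B3_def)
  have nzC1: "C1 \<noteq> 0"
  proof
    assume "C1 = 0" then have "r1 = q^1" using r10 by (simp add: C1_def field_simps)
    then show False using wd1 by blast
  qed
  have nzC2: "C2 \<noteq> 0"
  proof
    assume "C2 = 0" then have "r2 = q^1" using r20 by (simp add: C2_def field_simps)
    then show False using wd2 by blast
  qed
  have nzC3: "C3 \<noteq> 0"
  proof
    assume "C3 = 0" then have "q^(Suc N) = 1" by (simp add: C3_def Q_def)
    then show False using qj by blast
  qed
  have nzP: "P \<noteq> 0" "B \<noteq> 0" "Qs \<noteq> 0" "R1 \<noteq> 0" "R2 \<noteq> 0" "E \<noteq> 0"
    using q0 r10 r20 by (simp_all add: P_def B_def Qs_def R1_def R2_def E_def)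
  have nq1: "1 - q \<noteq> 0" using qj[rule_format, of 1] by auto
  have N1: "qpoch q r1 (- int s - 1) = (B*P*P*q) / ((-r1) * E * R1 * (C1 * B1))"
    unfolding qpoch_negS[OF q0 r10] B_def P_def E_def R1_def C1_def B1_def
    by (simp add: power2_eq_square mult_ac)
  have N2: "qpoch q r2 (- int s - 1) = (B*P*P*q) / ((-r2) * E * R2 * (C2 * B2))"
    unfolding qpoch_negS[OF q0 r20] B_def P_def E_def R2_def C2_def B2_def
    by (simp add: power2_eq_square mult_ac)
  have N3: "qpoch q (inverse (q^N)) (- int s - 1) = (B*P*P*q) / ((- inverse Q) * E * inverse Qs * (C3 * B3))"
  proof -
    have "inverse (q^N) \<noteq> 0" using q0 by simp
    note h = qpoch_negS[OF q0 this, of s]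
    have e1: "q / inverse (q^N) = q * Q" by (simp add: Q_def divide_inverse)
    have e2: "q * Q * q = q^(N+2)" by (simp add: Q_def power_add power2_eq_square mult_ac)
    show ?thesis unfolding h e1 e2 B_def P_def E_def Qs_def C3_def B3_def Q_def
      by (simp add: power_inverse mult_ac)
  qed
  have D1: "qpoch q (q\<^sup>2/r1) (- int s - 1) = (B*P*P*q) / ((-(q*q/r1)) * E * (P*P/R1) * ((-(r1/q)) * C1 * A1))"
  proof -
    have "q\<^sup>2/r1 \<noteq> 0" using q0 r10 by simp
    note h = qpoch_negS[OF q0 this, of s]
    have e1: "q / (q\<^sup>2/r1) = r1/q" using q0 by (simp add: power2_eq_square)
    have e2: "r1/q * q = r1" using q0 by simp
    have e3: "1 - r1/q = (-(r1/q)) * C1" using q0 r10 by (simp add: C1_def field_simps)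
    show ?thesis unfolding h e1 e2 e3 B_def P_def E_def R1_def A1_def
      by (simp add: power_divide power_mult_distrib power2_eq_square mult_ac)
  qed
  have D2: "qpoch q (q\<^sup>2/r2) (- int s - 1) = (B*P*P*q) / ((-(q*q/r2)) * E * (P*P/R2) * ((-(r2/q)) * C2 * A2))"
  proof -
    have "q\<^sup>2/r2 \<noteq> 0" using q0 r20 by simp
    note h = qpoch_negS[OF q0 this, of s]
    have e1: "q / (q\<^sup>2/r2) = r2/q" using q0 by (simp add: power2_eq_square)
    have e2: "r2/q * q = r2" using q0 by simp
    have e3: "1 - r2/q = (-(r2/q)) * C2" using q0 r20 by (simp add: C2_def field_simps)
    show ?thesis unfolding h e1 e2 e3 B_def P_def E_def R2_def A2_def
      by (simp add: power_divide power_mult_distrib power2_eq_square mult_ac)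
  qed
  have D3: "qpoch q (q^(N+2)) (- int s - 1) = (B*P*P*q) / ((-(q*q*Q)) * E * (P*P*Qs) * ((-(inverse (q*Q))) * C3 * A3))"
  proof -
    have "q^(N+2) \<noteq> 0" using q0 by simp
    note h = qpoch_negS[OF q0 this, of s]
    have e0: "q^(N+2) = q*q*Q" by (simp add: Q_def power_add power2_eq_square mult_ac)
    have e1: "q / (q*q*Q) = inverse (q*Q)" using q0 by (simp add: field_simps)
    have e2: "inverse (q*Q) * q = inverse (q^N)" using q0 by (simp add: Q_def)
    have e3: "1 - inverse (q*Q) = (-(inverse (q*Q))) * C3" using q0 Q0 by (simp add: C3_def field_simps)
    show ?thesis unfolding h unfolding e0 e1 e2 e3 B_def P_def E_def Qs_def A3_def
      by (simp add: power_mult_distrib mult_ac Q_def)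
  qed
  have X: "(q ^ (2 + N) / (r1 * r2)) powi (- int s - 1) = inverse ((q*q*Q/(r1*r2)) * (P*P*Qs/(R1*R2)))"
  proof -
    have ns: "- int s - 1 = - int (Suc s)" by simp
    show ?thesis unfolding ns power_int_minus power_int_of_nat
      by (simp add: P_def Qs_def R1_def R2_def Q_def power_divide power_mult_distrib
           power_add power2_eq_square mult_ac)
  qed
  have S: "(-1::complex) powi (- int s - 1) = - E"
  proof -
    have ns: "- int s - 1 = - int (Suc s)" by simp
    show ?thesis unfolding ns power_int_minus_one_minus power_int_of_nat by (simp add: E_def)
  qed
  have T: "q powi (- binom2 (- int s - 1)) = inverse (B*P*P*q)"
  proof -
    have ns: "- int s - 1 = - int (Suc s)" by simp
    show ?thesis unfolding ns binom2_neg power_int_minus power_int_of_nat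
      by (simp add: B_def P_def power_add mult_ac)
  qed
  have Lm: "cL q r1 r2 N (- int s - 1) = (B*P*P*q) / ((-r1) * E * R1 * (C1 * B1)) * ((B*P*P*q) / ((-r2) * E * R2 * (C2 * B2)))
     * ((B*P*P*q) / ((- inverse Q) * E * inverse Qs * (C3 * B3)))
     / ((B*P*P*q) / ((-(q*q/r1)) * E * (P*P/R1) * ((-(r1/q)) * C1 * A1)) * ((B*P*P*q) / ((-(q*q/r2)) * E * (P*P/R2) * ((-(r2/q)) * C2 * A2)))
       * ((B*P*P*q) / ((-(q*q*Q)) * E * (P*P*Qs) * ((-(inverse (q*Q))) * C3 * A3))))
     * inverse ((q*q*Q/(r1*r2)) * (P*P*Qs/(R1*R2))) * (- E) * inverse (B*P*P*q) / (1 - q)"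
    unfolding cL_def N1 N2 N3 D1 D2 D3 X S T ..
  have Ls: "cL q r1 r2 N (int s) = A1 * A2 * A3 / (B1 * B2 * B3) * (q*q*Q/(r1*r2))^s * E * inverse B / (1 - q)"
    unfolding cL_def qpoch_nat binom2_nat power_int_minus power_int_of_nat
    by (simp add: A1_def A2_def A3_def B1_def B2_def B3_def E_def B_def Q_def power_add power2_eq_square mult_ac)
  have Xs: "(q*q*Q/(r1*r2))^s = P*P*Qs/(R1*R2)"
    by (simp add: P_def Qs_def R1_def R2_def Q_def power_divide power_mult_distrib)
  have EE: "E * E = 1" by (simp add: E_def flip: power_mult_distrib)
  have EE': "E * (E * z) = z" for z using EE by (simp add: mult.assoc[symmetric])
  show ?thesis unfolding Lm Ls Xs
    using nzB nzC1 nzC2 nzC3 nzP nq1 Q0 q0 r10 r20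
    by (simp add: field_simps EE')
qed

end


context QS begin

lemma coef:
  assumes "- int N - 1 \<le> r" "r \<le> int N"
  shows "cL q r1 r2 N r = KK q r1 r2 N * (\<Sum>n\<le>N. dR q r1 r2 N n * ee q n r)"
proof (cases "0 \<le> r")
  case True
  then obtain s where s: "r = int s" "s \<le> N" using assms by (metis nat_0_le nat_le_iff)
  show ?thesis unfolding s(1) by (rule coef_pos[OF s(2)])
next
  case False
  define s where "s = nat (- r - 1)"
  have rs: "r = - int s - 1" using False by (simp add: s_def)
  have sN: "s \<le> N" using assms False by (simp add: s_def)
  have e: "ee q n r = ee q n (int s)" for n
  proof -
    have e1: "int n - r = int n + int s + 1" and e2: "int n + r + 1 = int n - int s" using rs by simp_all
    show ?thesis unfolding ee_def e1 e2 by (simp only: mult.commute)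
  qed
  show ?thesis unfolding e unfolding rs cL_reflect by (rule coef_pos[OF sN])
qed

end

lemma infsum_support:
  fixes f :: "'a \<Rightarrow> complex"
  assumes "finite I" "\<And>x. x \<notin> I \<Longrightarrow> f x = 0"
  shows "infsum f UNIV = sum f I"
proof -
  have "infsum f UNIV = infsum f I"
    by (rule infsum_cong_neutral) (use assms in auto)
  then show ?thesis using assms by simp
qed

theorem corollary2p3:
  fixes q \<rho>1 \<rho>2 :: complex and N :: nat
    and \<alpha> :: "int \<Rightarrow> complex" and \<beta> :: "nat \<Rightarrow> complex"
  assumes hq0: "0 < norm q" and hq1: "norm q < 1"
    and hr1: "\<rho>1 \<noteq> 0" and hr2: "\<rho>2 \<noteq> 0"
    and wd1: "\<forall>m::nat. 1 \<le> m \<longrightarrow> \<rho>1 \<noteq> q ^ m"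
    and wd2: "\<forall>m::nat. 1 \<le> m \<longrightarrow> \<rho>2 \<noteq> q ^ m"
    and wd3: "\<forall>n::nat. qpoch q (\<rho>1 * \<rho>2 / q ^ (N + 1)) (int n) \<noteq> 0"
    and bailey: "\<forall>n::nat. \<beta> n =
        (\<Sum>\<^sub>\<infinity>r::int. \<alpha> r / (qpoch q q (int n - r) * qpoch q q (int n + r + 1)))"
  shows "(\<Sum>\<^sub>\<infinity>n::int.
            (qpoch q \<rho>1 n * qpoch q \<rho>2 n * qpoch q (inverse (q ^ N)) n)
            / (qpoch q (q\<^sup>2 / \<rho>1) n * qpoch q (q\<^sup>2 / \<rho>2) n * qpoch q (q ^ (N + 2)) n)
            * (q ^ (2 + N) / (\<rho>1 * \<rho>2)) powi n * (-1) powi n * q powi (- binom2 n)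
            * \<alpha> n / (1 - q))
       = (qpoch q (q\<^sup>2) (int N) * qpoch q (q\<^sup>2 / (\<rho>1 * \<rho>2)) (int N))
         / (qpoch q (q\<^sup>2 / \<rho>1) (int N) * qpoch q (q\<^sup>2 / \<rho>2) (int N))
         * (\<Sum>\<^sub>\<infinity>n::nat.
              qpoch q \<rho>1 (int n) * qpoch q \<rho>2 (int n) * qpoch q (inverse (q ^ N)) (int n)
              * q ^ n * \<beta> n / qpoch q (\<rho>1 * \<rho>2 / q ^ (N + 1)) (int n))"
proof -
  have q0: "q \<noteq> 0" using hq0 by auto
  have qj: "\<forall>i. 0 < i \<longrightarrow> q^i \<noteq> 1"
  proof (intro allI impI notI)
    fix i :: nat assume "0 < i" "q^i = 1"
    then have "norm q ^ i = 1" by (metis norm_one norm_power)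
    moreover have "norm q ^ i < 1" using \<open>0 < i\<close> hq1 by (simp add: power_less_one_iff)
    ultimately show False by simp
  qed
  have wd3': "\<forall>j::nat. \<rho>1 * \<rho>2 * q ^ j \<noteq> q ^ (N + 1)"
  proof (intro allI notI)
    fix j assume h: "\<rho>1 * \<rho>2 * q ^ j = q ^ (N + 1)"
    have "qp q (\<rho>1 * \<rho>2 / q ^ (N + 1)) (Suc j) = 0"
      by (rule qp_zero[of j]) (use h q0 in \<open>auto simp: field_simps\<close>)
    with wd3 show False by (metis qpoch_nat)
  qed
  interpret QS q \<rho>1 \<rho>2 N
    using q0 qj hr1 hr2 wd1 wd2 wd3' by unfold_locales auto
  define I where "I = {- int N - 1 .. int N}"
  have finI: "finite I" by (simp add: I_def)
  have L: "(\<Sum>\<^sub>\<infinity>n::int.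
            (qpoch q \<rho>1 n * qpoch q \<rho>2 n * qpoch q (inverse (q ^ N)) n)
            / (qpoch q (q\<^sup>2 / \<rho>1) n * qpoch q (q\<^sup>2 / \<rho>2) n * qpoch q (q ^ (N + 2)) n)
            * (q ^ (2 + N) / (\<rho>1 * \<rho>2)) powi n * (-1) powi n * q powi (- binom2 n)
            * \<alpha> n / (1 - q)) = (\<Sum>r\<in>I. \<alpha> r * cL q \<rho>1 \<rho>2 N r)"
  proof -
    have fe: "(qpoch q \<rho>1 n * qpoch q \<rho>2 n * qpoch q (inverse (q ^ N)) n)
            / (qpoch q (q\<^sup>2 / \<rho>1) n * qpoch q (q\<^sup>2 / \<rho>2) n * qpoch q (q ^ (N + 2)) n)
            * (q ^ (2 + N) / (\<rho>1 * \<rho>2)) powi n * (-1) powi n * q powi (- binom2 n)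
            * \<alpha> n / (1 - q) = \<alpha> n * cL q \<rho>1 \<rho>2 N n" for n
      unfolding cL_def by (simp add: divide_inverse mult_ac)
    have z: "cL q \<rho>1 \<rho>2 N n = 0" if "n \<notin> I" for n
    proof (cases "n > int N")
      case True
      have "qpoch q (inverse (q ^ N)) n = qp q (inverse (q ^ N)) (nat n)"
        using True by (metis qpoch_nat nat_0_le less_imp_le of_nat_0_le_iff order_trans)
      also have "\<dots> = 0" by (rule qp_inv_zero[OF q0]) (use True in auto)
      finally show ?thesis unfolding cL_def by simp
    next
      case False
      have nlt: "n < - int N - 1" using that False by (auto simp: I_def)
      obtain m where m: "n = - int m" "N + 2 \<le> m"
      proof
        show "n = - int (nat (-n))" using \<open>n < - int N - 1\<close> by simp
        show "N + 2 \<le> nat (-n)" using \<open>n < - int N - 1\<close> by simp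
      qed
      have "(\<Prod>k\<in>{1..m}. 1 - q^(N+2) / q ^ k) = 0"
        by (rule prod_zero) (use m q0 in \<open>auto intro!: bexI[of _ "N+2"]\<close>)
      then have "qpoch q (q^(N+2)) n = 0" using m by (simp add: qpoch_neg)
      then show ?thesis unfolding cL_def by simp
    qed
    show ?thesis unfolding fe by (rule infsum_support[OF finI]) (simp add: z)
  qed
  have bet: "\<beta> n = (\<Sum>r\<in>I. \<alpha> r * ee q n r)" if "n \<le> N" for n
  proof -
    have "\<beta> n = (\<Sum>\<^sub>\<infinity>r::int. \<alpha> r * ee q n r)"
      using bailey by (simp add: ee_def divide_inverse)
    also have "\<dots> = (\<Sum>r\<in>I. \<alpha> r * ee q n r)"
    proof (rule infsum_support[OF finI])
      fix r assume "r \<notin> I"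
      then have "int n - r < 0 \<or> int n + r + 1 < 0" using that by (auto simp: I_def)
      then show "\<alpha> r * ee q n r = 0" unfolding ee_def using qq_neg[OF q0] by auto
    qed
    finally show ?thesis .
  qed
  have R: "(\<Sum>\<^sub>\<infinity>n::nat.
              qpoch q \<rho>1 (int n) * qpoch q \<rho>2 (int n) * qpoch q (inverse (q ^ N)) (int n)
              * q ^ n * \<beta> n / qpoch q (\<rho>1 * \<rho>2 / q ^ (N + 1)) (int n))
        = (\<Sum>n\<le>N. dR q \<rho>1 \<rho>2 N n * \<beta> n)"
  proof -
    have fe: "qpoch q \<rho>1 (int n) * qpoch q \<rho>2 (int n) * qpoch q (inverse (q ^ N)) (int n)
              * q ^ n * \<beta> n / qpoch q (\<rho>1 * \<rho>2 / q ^ (N + 1)) (int n) = dR q \<rho>1 \<rho>2 N n * \<beta> n" for n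
      unfolding dR_def by (simp add: divide_inverse mult_ac)
    show ?thesis unfolding fe
      by (rule infsum_support) (auto simp: dR_def qp_inv_zero[OF q0])
  qed
  have KKe: "(qpoch q (q\<^sup>2) (int N) * qpoch q (q\<^sup>2 / (\<rho>1 * \<rho>2)) (int N))
         / (qpoch q (q\<^sup>2 / \<rho>1) (int N) * qpoch q (q\<^sup>2 / \<rho>2) (int N)) = KK q \<rho>1 \<rho>2 N"
    unfolding KK_def by simp
  have "KK q \<rho>1 \<rho>2 N * (\<Sum>n\<le>N. dR q \<rho>1 \<rho>2 N n * \<beta> n)
      = KK q \<rho>1 \<rho>2 N * (\<Sum>n\<le>N. dR q \<rho>1 \<rho>2 N n * (\<Sum>r\<in>I. \<alpha> r * ee q n r))"
    by (simp add: bet)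
  also have "\<dots> = (\<Sum>r\<in>I. \<alpha> r * (KK q \<rho>1 \<rho>2 N * (\<Sum>n\<le>N. dR q \<rho>1 \<rho>2 N n * ee q n r)))"
    by (simp add: sum_distrib_left sum_distrib_right mult_ac sum.swap[of _ "{..N}" I])
  also have "\<dots> = (\<Sum>r\<in>I. \<alpha> r * cL q \<rho>1 \<rho>2 N r)"
    by (rule sum.cong) (auto simp: I_def coef)
  finally show ?thesis unfolding L R KKe by simp
qed


end
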